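(* Let $-1\le a<1$ and let $\mathfrak g=\mathfrak r_{3,a}$, the Lie algebra with basis $\{e_1,e_2,e_3\}$ and nonzero brackets $[e_1,e_2]=e_2$, $[e_1,e_3]=ae_3$, identified with $\mathbb R^3$ via this basis. Then $$U=\left\{\begin{pmatrix}1&0&0\\0&1&0\\0&\lambda&1\end{pmatrix}:\lambda\in\mathbb R\right\}$$ is a set of representatives of $\mathcal{PM}(\mathfrak g)$.
   Context: $\mathcal M(\mathfrak g)$ is the set of inner products on $\mathfrak g\cong\mathbb R^3$, with $\mathrm{GL}_3(\mathbb R)$-action $g.\langle\cdot,\cdot\rangle=\langle g^{-1}\cdot,g^{-1}\cdot\rangle$; $\langle\cdot,\cdot\rangle_0$ makes $\{e_1,e_2,e_3\}$ orthonormal. Two inner products are isometric up to scaling if $\langle\cdot,\cdot\rangle_1=k\langle f\cdot,f\cdot\rangle_2$ for some $k>0$ and Lie algebra automorphism $f$; $[\langle\cdot,\cdot\rangle]$ denotes the equivalence class and $\mathcal{PM}(\mathfrak g)$ the set of classes. A subset $U\subset\mathrm{GL}_3(\mathbb R)$ is a set of representatives of $\mathcal{PM}(\mathfrak g)$ if $\mathcal{PM}(\mathfrak g)=\{[h.\langle\cdot,\cdot\rangle_0]: h\in U\}$. *)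

theory Defs
  imports "HOL-Analysis.Analysis"
begin

type_synonym vec3 = "real ^ 3"
type_synonym mat3 = "real ^ 3 ^ 3"

text \<open>Lie bracket of r_{3,a} in coordinates w.r.t. e1,e2,e3:
  [e1,e2] = e2, [e1,e3] = a e3, all other brackets of basis vectors zero,
  extended bilinearly and antisymmetrically.\<close>
definition r3a_bracket :: "real \<Rightarrow> vec3 \<Rightarrow> vec3 \<Rightarrow> vec3" where
  "r3a_bracket a x y = vector [0, x$1 * y$2 - x$2 * y$1, a * (x$1 * y$3 - x$3 * y$1)]"

definition lie_aut :: "(vec3 \<Rightarrow> vec3 \<Rightarrow> vec3) \<Rightarrow> (vec3 \<Rightarrow> vec3) \<Rightarrow> bool" where
  "lie_aut br f \<longleftrightarrow> linear f \<and> bij f \<and> (\<forall>x y. f (br x y) = br (f x) (f y))"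

definition inner_products :: "(vec3 \<Rightarrow> vec3 \<Rightarrow> real) set" where
  "inner_products = {B. bilinear B \<and> (\<forall>x y. B x y = B y x) \<and> (\<forall>x. x \<noteq> 0 \<longrightarrow> B x x > 0)}"

definition GL3 :: "mat3 set" where
  "GL3 = {g. invertible g}"

definition act :: "mat3 \<Rightarrow> (vec3 \<Rightarrow> vec3 \<Rightarrow> real) \<Rightarrow> (vec3 \<Rightarrow> vec3 \<Rightarrow> real)" where
  "act g B = (\<lambda>x y. B (matrix_inv g *v x) (matrix_inv g *v y))"

definition ip0 :: "vec3 \<Rightarrow> vec3 \<Rightarrow> real" where
  "ip0 = (\<lambda>x y. x \<bullet> y)"

definition isom_scal :: "(vec3 \<Rightarrow> vec3 \<Rightarrow> vec3) \<Rightarrow> (vec3 \<Rightarrow> vec3 \<Rightarrow> real) \<Rightarrow> (vec3 \<Rightarrow> vec3 \<Rightarrow> real) \<Rightarrow> bool" where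
  "isom_scal br B1 B2 \<longleftrightarrow> (\<exists>k f. k > 0 \<and> lie_aut br f \<and> (\<forall>x y. B1 x y = k * B2 (f x) (f y)))"

definition ip_class :: "(vec3 \<Rightarrow> vec3 \<Rightarrow> vec3) \<Rightarrow> (vec3 \<Rightarrow> vec3 \<Rightarrow> real) \<Rightarrow> (vec3 \<Rightarrow> vec3 \<Rightarrow> real) set" where
  "ip_class br B = {B' \<in> inner_products. isom_scal br B' B}"

definition PM :: "(vec3 \<Rightarrow> vec3 \<Rightarrow> vec3) \<Rightarrow> (vec3 \<Rightarrow> vec3 \<Rightarrow> real) set set" where
  "PM br = ip_class br ` inner_products"

definition set_of_reps :: "(vec3 \<Rightarrow> vec3 \<Rightarrow> vec3) \<Rightarrow> mat3 set \<Rightarrow> bool" where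
  "set_of_reps br U \<longleftrightarrow> U \<subseteq> GL3 \<and> PM br = {ip_class br (act h ip0) | h. h \<in> U}"

end

theory Submission
  imports Defs
begin

definition Hm :: "real \<Rightarrow> mat3" where "Hm l = vector [vector [1, 0, 0], vector [0, 1, 0], vector [0, l, 1]]"
lemma H_inv: "Hm l ** Hm (-l) = mat 1" "Hm (-l) ** Hm l = mat 1"
  by (simp_all add: Hm_def vec_eq_iff forall_3 matrix_matrix_mult_def sum_3 mat_def vector_3)
lemma mi: "matrix_inv (Hm l) = Hm (-l)"
proof -
  let ?P = "\<lambda>A'. Hm l ** A' = mat 1 \<and> A' ** Hm l = mat 1"
  have "?P (Hm (-l))" using H_inv by blast
  hence "?P (SOME A'. ?P A')" by (rule someI)
  then obtain X where X: "X = (SOME A'. ?P A')" "X ** Hm l = mat 1" by blast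
  have "X = X ** (Hm l ** Hm (-l))" using H_inv(1) by (simp add: matrix_mul_rid)
  also have "\<dots> = (X ** Hm l) ** Hm (-l)" by (simp add: matrix_mul_assoc)
  also have "\<dots> = Hm (-l)" using X(2) by (simp add: matrix_mul_lid)
  finally show ?thesis unfolding matrix_inv_def X(1)[symmetric] .
qed
lemma Hmv: "Hm (-l) *v x = vector [x$1, x$2, x$3 - l*x$2]"
  by (simp add: vec_eq_iff forall_3 matrix_vector_mult_def sum_3 Hm_def)
lemma inner3: "(x::vec3) \<bullet> y = x$1*y$1 + x$2*y$2 + x$3*y$3"
  by (simp add: inner_vec_def sum_3)
lemma actH: "act (Hm l) ip0 x y = x$1*y$1 + x$2*y$2 + (x$3 - l*x$2)*(y$3 - l*y$2)"
  by (simp only: act_def mi Hmv ip0_def inner3 vector_3)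
lemma Hinvt: "invertible (Hm l)" using H_inv invertible_def by blast

abbreviation "e i \<equiv> (axis i 1 :: vec3)"
lemma dec3: "(x::vec3) = x$1 *\<^sub>R e 1 + x$2 *\<^sub>R e 2 + x$3 *\<^sub>R e 3"
  by (simp add: vec_eq_iff forall_3 axis_def)
lemma bil_exp:
  assumes "bilinear B"
  shows "B x y = x$1*y$1*B (e 1) (e 1) + x$1*y$2*B (e 1) (e 2) + x$1*y$3*B (e 1) (e 3)
   + x$2*y$1*B (e 2) (e 1) + x$2*y$2*B (e 2) (e 2) + x$2*y$3*B (e 2) (e 3)
   + x$3*y$1*B (e 3) (e 1) + x$3*y$2*B (e 3) (e 2) + x$3*y$3*B (e 3) (e 3)"
proof -
  have "B x y = B (x$1 *\<^sub>R e 1 + x$2 *\<^sub>R e 2 + x$3 *\<^sub>R e 3) (y$1 *\<^sub>R e 1 + y$2 *\<^sub>R e 2 + y$3 *\<^sub>R e 3)"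
    using dec3 by metis
  thus ?thesis
    by (simp add: bilinear_ladd[OF assms] bilinear_radd[OF assms] bilinear_lmul[OF assms] bilinear_rmul[OF assms] algebra_simps)
qed

definition gmap :: "real \<Rightarrow> real \<Rightarrow> real \<Rightarrow> real \<Rightarrow> vec3 \<Rightarrow> vec3" where
  "gmap s t al be x = vector [x$1, s*x$2 - al*x$1, t*x$3 - be*x$1]"

lemma gmap_comp: "s \<noteq> 0 \<Longrightarrow> t \<noteq> 0 \<Longrightarrow> gmap s t al be (gmap (1/s) (1/t) (- (al/s)) (- (be/t)) x) = x"
  by (simp add: gmap_def vec_eq_iff forall_3 field_simps)
lemma gmap_comp2: "s \<noteq> 0 \<Longrightarrow> t \<noteq> 0 \<Longrightarrow> gmap (1/s) (1/t) (- (al/s)) (- (be/t)) (gmap s t al be x) = x"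
  by (simp add: gmap_def vec_eq_iff forall_3 field_simps)

lemma gmap_aut: assumes "s \<noteq> 0" "t \<noteq> 0" shows "lie_aut (r3a_bracket a) (gmap s t al be)"
  unfolding lie_aut_def
proof (intro conjI allI)
  show "linear (gmap s t al be)"
    by (rule linearI) (simp_all add: gmap_def vec_eq_iff forall_3 algebra_simps)
  show "bij (gmap s t al be)"
    by (rule o_bij[where g="gmap (1/s) (1/t) (- (al/s)) (- (be/t))"]) (auto simp: fun_eq_iff gmap_comp gmap_comp2 assms)
  fix x y
  show "gmap s t al be (r3a_bracket a x y) = r3a_bracket a (gmap s t al be x) (gmap s t al be y)"
    by (simp add: gmap_def r3a_bracket_def vec_eq_iff forall_3 algebra_simps)
qed

lemma aut_inv: assumes "lie_aut br f" shows "lie_aut br (inv f)"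
proof -
  have l: "linear f" and b: "bij f" and h: "\<And>x y. f (br x y) = br (f x) (f y)" using assms by (auto simp: lie_aut_def)
  have "linear (inv f)" using l b inj_linear_imp_inv_linear bij_is_inj by blast
  moreover have "bij (inv f)" using b bij_imp_bij_inv by blast
  moreover have "inv f (br x y) = br (inv f x) (inv f y)" for x y
  proof -
    have "f (br (inv f x) (inv f y)) = br x y" using h b by (simp add: bij_is_surj surj_f_inv_f)
    thus ?thesis using b by (metis bij_inv_eq_iff)
  qed
  ultimately show ?thesis by (simp add: lie_aut_def)
qed

lemma isom_sym: assumes "isom_scal br B1 B2" shows "isom_scal br B2 B1"
proof -
  obtain k f where k: "k > 0" "lie_aut br f" "\<And>x y. B1 x y = k * B2 (f x) (f y)"
    using assms by (auto simp: isom_scal_def)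
  have b: "bij f" using k by (simp add: lie_aut_def)
  have "B2 x y = (1/k) * B1 (inv f x) (inv f y)" for x y
    using k b by (simp add: bij_is_surj surj_f_inv_f)
  thus ?thesis unfolding isom_scal_def using k aut_inv
    by (metis divide_pos_pos zero_less_one)
qed

lemma isom_trans: assumes "isom_scal br B1 B2" "isom_scal br B2 B3" shows "isom_scal br B1 B3"
proof -
  obtain k f where k: "k > 0" "lie_aut br f" "\<And>x y. B1 x y = k * B2 (f x) (f y)"
    using assms by (auto simp: isom_scal_def)
  obtain k' f' where k': "k' > 0" "lie_aut br f'" "\<And>x y. B2 x y = k' * B3 (f' x) (f' y)"
    using assms by (auto simp: isom_scal_def)
  have "lie_aut br (f' \<circ> f)" using k(2) k'(2)
    by (auto simp: lie_aut_def linear_compose bij_comp)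
  moreover have "B1 x y = (k*k') * B3 ((f' \<circ> f) x) ((f' \<circ> f) y)" for x y using k k' by simp
  ultimately show ?thesis unfolding isom_scal_def using k k' by (metis mult_pos_pos)
qed

lemma core:
  fixes g11 g12 g13 g22 g23 g33 al be k s t l x1 x2 x3 y1 y2 y3 :: real
  assumes h1: "g12 = al*g22 + be*g23" and h2: "g13 = al*g23 + be*g33"
  and hk: "g11 = k + 2*al*g12 + 2*be*g13 - al^2*g22 - 2*al*be*g23 - be^2*g33"
  and ht: "t^2*g33 = k" and hs: "s^2*g22 = k*(1+l^2)" and hst: "s*t*g23 = -k*l"
  shows "x1*y1*g11 + x1*(s*y2 - al*y1)*g12 + x1*(t*y3 - be*y1)*g13
       + (s*x2 - al*x1)*y1*g12 + (s*x2 - al*x1)*(s*y2 - al*y1)*g22 + (s*x2 - al*x1)*(t*y3 - be*y1)*g23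
       + (t*x3 - be*x1)*y1*g13 + (t*x3 - be*x1)*(s*y2 - al*y1)*g23 + (t*x3 - be*x1)*(t*y3 - be*y1)*g33
       = k*(x1*y1+x2*y2+(x3-l*x2)*(y3-l*y2))"
proof -
  have "x1*y1*g11 + x1*(s*y2 - al*y1)*g12 + x1*(t*y3 - be*y1)*g13
       + (s*x2 - al*x1)*y1*g12 + (s*x2 - al*x1)*(s*y2 - al*y1)*g22 + (s*x2 - al*x1)*(t*y3 - be*y1)*g23
       + (t*x3 - be*x1)*y1*g13 + (t*x3 - be*x1)*(s*y2 - al*y1)*g23 + (t*x3 - be*x1)*(t*y3 - be*y1)*g33
       - k*(x1*y1+x2*y2+(x3-l*x2)*(y3-l*y2))
     = x2*y2*(s^2*g22 - k*(1+l^2)) + (x2*y3+x3*y2)*(s*t*g23 + k*l) + x3*y3*(t^2*g33 - k)"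
    unfolding hk h1 h2 by algebra
  thus ?thesis using ht hs hst by simp
qed

lemma solve2:
  fixes d :: real
  assumes "d \<noteq> 0" "d = g22*g33 - g23^2"
  shows "g12 = (g12*g33 - g13*g23)/d*g22 + (g13*g22 - g12*g23)/d*g23"
    "g13 = (g12*g33 - g13*g23)/d*g23 + (g13*g22 - g12*g23)/d*g33"
proof -
  have n1: "g12*d = (g12*g33 - g13*g23)*g22 + (g13*g22 - g12*g23)*g23" unfolding assms(2) power2_eq_square by algebra
  have n2: "g13*d = (g12*g33 - g13*g23)*g23 + (g13*g22 - g12*g23)*g33" unfolding assms(2) power2_eq_square by algebra
  have e: "\<And>A B c. A/d*c = (A*c)/d" by simp
  show "g12 = (g12*g33 - g13*g23)/d*g22 + (g13*g22 - g12*g23)/d*g23"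
    unfolding e add_divide_distrib[symmetric] n1[symmetric] using assms(1) by simp
  show "g13 = (g12*g33 - g13*g23)/d*g23 + (g13*g22 - g12*g23)/d*g33"
    unfolding e add_divide_distrib[symmetric] n2[symmetric] using assms(1) by simp
qed

lemma main:
  assumes B: "B \<in> inner_products"
  shows "\<exists>l. isom_scal (r3a_bracket a) B (act (Hm l) ip0)"
proof -
  have bil: "bilinear B" and sy: "\<And>x y. B x y = B y x" and pos: "\<And>x. x \<noteq> 0 \<Longrightarrow> B x x > 0"
    using B by (auto simp: inner_products_def)
  define g11 where "g11 = B (e 1) (e 1)"
  define g12 where "g12 = B (e 1) (e 2)"
  define g13 where "g13 = B (e 1) (e 3)"
  define g22 where "g22 = B (e 2) (e 2)"
  define g23 where "g23 = B (e 2) (e 3)"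
  define g33 where "g33 = B (e 3) (e 3)"
  have exp: "B x y = x$1*y$1*g11 + x$1*y$2*g12 + x$1*y$3*g13
   + x$2*y$1*g12 + x$2*y$2*g22 + x$2*y$3*g23
   + x$3*y$1*g13 + x$3*y$2*g23 + x$3*y$3*g33" for x y
  proof -
    have s: "B (e 2) (e 1) = g12" "B (e 3) (e 1) = g13" "B (e 3) (e 2) = g23"
      unfolding g12_def g13_def g23_def using sy by metis+
    show ?thesis unfolding bil_exp[OF bil, of x y] s
      unfolding g11_def[symmetric] g12_def[symmetric] g13_def[symmetric] g22_def[symmetric] g23_def[symmetric] g33_def[symmetric]
      by (rule refl)
  qed
  have g33: "g33 > 0" unfolding g33_def by (rule pos) (simp add: vec_eq_iff axis_def)
  define d where "d = g22*g33 - g23^2"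
  define v :: vec3 where "v = vector [0, g33, - g23]"
  have v: "v$1 = 0" "v$2 = g33" "v$3 = - g23" by (simp_all add: v_def)
  have "v \<noteq> 0" using g33 v by auto
  hence "B v v > 0" by (rule pos)
  hence "g33 * d > 0" unfolding exp v d_def by (simp add: algebra_simps power2_eq_square)
  hence d: "d > 0" using g33 by (simp add: zero_less_mult_iff)
  define al where "al = (g12*g33 - g13*g23)/d"
  define be where "be = (g13*g22 - g12*g23)/d"
  have h1: "g12 = al*g22 + be*g23" unfolding al_def be_def by (rule solve2) (use d d_def in auto)
  have h2: "g13 = al*g23 + be*g33" unfolding al_def be_def by (rule solve2) (use d d_def in auto)
  define u :: vec3 where "u = vector [1, -al, -be]"
  define k where "k = B u u"
  have "u$1 = 1" by (simp add: u_def)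
  hence "u \<noteq> 0" by auto
  hence k: "k > 0" unfolding k_def by (rule pos)
  have hk: "g11 = k + 2*al*g12 + 2*be*g13 - al^2*g22 - 2*al*be*g23 - be^2*g33"
    unfolding k_def exp by (simp add: u_def algebra_simps power2_eq_square)
  define t where "t = sqrt (k/g33)"
  define s where "s = sqrt (k*g33/d)"
  define l where "l = - s*t*g23/k"
  have t: "t > 0" and s: "s > 0" using k g33 d by (auto simp: t_def s_def)
  have ht: "t^2*g33 = k" using k g33 by (simp add: t_def)
  have hst: "s*t*g23 = -k*l" using k by (simp add: l_def)
  have s2: "s^2 = k*g33/d" using k g33 d by (simp add: s_def)
  have t2: "t^2 = k/g33" using k g33 by (simp add: t_def)
  have hs: "s^2*g22 = k*(1+l^2)"
  proof -
    have "k*(1+l^2) = k + s^2*t^2*g23^2/k" using k by (simp add: l_def field_simps power2_eq_square)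
    also have "\<dots> = k*(d + g23^2)/d" unfolding s2 t2 using k g33 d by (simp add: field_simps power2_eq_square)
    also have "\<dots> = s^2*g22" unfolding s2 d_def using d g33 by (simp add: field_simps)
    finally show ?thesis by simp
  qed
  have "act (Hm l) ip0 x y = (1/k) * B (gmap s t al be x) (gmap s t al be y)" for x y
  proof -
    have "B (gmap s t al be x) (gmap s t al be y) = k * act (Hm l) ip0 x y"
      unfolding exp actH using core[OF h1 h2 hk ht hs hst, where ?x1.0="x$1" and ?x2.0="x$2" and ?x3.0="x$3" and ?y1.0="y$1" and ?y2.0="y$2" and ?y3.0="y$3"]
      by (simp add: gmap_def)
    thus ?thesis using k by simp
  qed
  hence "isom_scal (r3a_bracket a) (act (Hm l) ip0) B"
    unfolding isom_scal_def using gmap_aut[of s t a al be] s t k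
    by (intro exI[of _ "1/k"] exI[of _ "gmap s t al be"]) auto
  thus ?thesis using isom_sym by blast
qed

lemma act_ip: "act (Hm l) ip0 \<in> inner_products"
proof -
  have "bilinear (act (Hm l) ip0)"
    unfolding bilinear_def actH
    by (auto intro!: linearI simp: algebra_simps)
  moreover have "act (Hm l) ip0 x y = act (Hm l) ip0 y x" for x y
    unfolding actH by (simp add: algebra_simps)
  moreover have "act (Hm l) ip0 x x > 0" if "x \<noteq> 0" for x
  proof (rule ccontr)
    assume "\<not> ?thesis"
    hence le: "x$1*x$1 + x$2*x$2 + (x$3 - l*x$2)*(x$3 - l*x$2) \<le> 0" unfolding actH by simp
    have "0 \<le> x$1*x$1" "0 \<le> x$2*x$2" "0 \<le> (x$3 - l*x$2)*(x$3 - l*x$2)" by simp_all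
    hence "x$1*x$1 = 0" "x$2*x$2 = 0" "(x$3 - l*x$2)*(x$3 - l*x$2) = 0" using le by linarith+
    hence "x$1 = 0" "x$2 = 0" "x$3 = 0" by auto
    hence "x = 0" by (simp add: vec_eq_iff forall_3)
    thus False using that by simp
  qed
  ultimately show ?thesis by (auto simp: inner_products_def)
qed

lemma class_eq: assumes "isom_scal br B B0" shows "ip_class br B = ip_class br B0"
proof -
  have "isom_scal br B' B \<longleftrightarrow> isom_scal br B' B0" for B'
    using isom_trans[OF _ assms, of B'] isom_trans[OF _ isom_sym[OF assms], of B'] by blast
  thus ?thesis by (simp add: ip_class_def)
qed

theorem proposition3p9:
  fixes a :: real
  assumes "-1 \<le> a" and "a < 1"
  shows "set_of_reps (r3a_bracket a)
           {vector [vector [1, 0, 0], vector [0, 1, 0], vector [0, l, 1]] | l. True}"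
proof -
  have U: "{vector [vector [1, 0, 0], vector [0, 1, 0], vector [0, l, 1]] | l. True} = {Hm l | l. True}"
    by (simp add: Hm_def)
  have sub: "{Hm l | l. True} \<subseteq> GL3" using Hinvt by (auto simp: GL3_def)
  have PMe: "PM (r3a_bracket a) = {ip_class (r3a_bracket a) (act h ip0) | h. h \<in> {Hm l | l. True}}"
  proof
    show "PM (r3a_bracket a) \<subseteq> {ip_class (r3a_bracket a) (act h ip0) | h. h \<in> {Hm l | l. True}}"
    proof
      fix C assume "C \<in> PM (r3a_bracket a)"
      then obtain B where B: "B \<in> inner_products" "C = ip_class (r3a_bracket a) B" by (auto simp: PM_def)
      obtain l where il: "isom_scal (r3a_bracket a) B (act (Hm l) ip0)" using main[OF B(1)] by blast
      have "C = ip_class (r3a_bracket a) (act (Hm l) ip0)" using B(2) class_eq[OF il] by simp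
      thus "C \<in> {ip_class (r3a_bracket a) (act h ip0) | h. h \<in> {Hm l | l. True}}" by blast
    qed
    show "{ip_class (r3a_bracket a) (act h ip0) | h. h \<in> {Hm l | l. True}} \<subseteq> PM (r3a_bracket a)"
      unfolding PM_def using act_ip by blast
  qed
  show ?thesis unfolding set_of_reps_def U using sub PMe by (rule conjI)
qed

end
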